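(* Let $n,k,t$ be positive integers with $k>t>0$, $n>2k-t$ and $n<(t+1)(k+1-t)$. Then $$\operatorname{tw}(K(n,k,t))< \binom{n}{k}-\binom{n-t}{k-t}-1.$$
   Context: For integers $k>t\ge 1$ and $n>2k-t$, the generalized Kneser graph $K(n,k,t)$ is the graph whose vertices are the $k$-element subsets of $[n]=\{1,\dots,n\}$, two vertices $K,K'$ being adjacent if and only if $|K\cap K'|<t$. A tree decomposition of a graph $\Gamma$ is a pair $(T,(B_x)_{x\in V(T)})$ where $T$ is a tree and each $B_x\subseteq V(\Gamma)$, such that every edge of $\Gamma$ is contained in some $B_x$, and for each vertex $v$ of $\Gamma$ the set $\{x\in V(T): v\in B_x\}$ is non-empty and induces a connected subgraph of $T$. Its width is $\max_x |B_x|-1$, and the treewidth $\operatorname{tw}(\Gamma)$ is the minimum width of a tree decomposition of $\Gamma$. *)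

theory Defs
  imports Main
begin

definition is_graph :: "'a set \<Rightarrow> 'a set set \<Rightarrow> bool" where
  "is_graph V E \<longleftrightarrow> (\<forall>e\<in>E. e \<subseteq> V \<and> card e = 2)"

definition induced_connected :: "'a set \<Rightarrow> 'a set set \<Rightarrow> bool" where
  "induced_connected S E \<longleftrightarrow>
     (\<forall>x\<in>S. \<forall>y\<in>S. (x, y) \<in> ({(u, v). u \<in> S \<and> v \<in> S \<and> {u, v} \<in> E})\<^sup>*)"

definition is_tree :: "'a set \<Rightarrow> 'a set set \<Rightarrow> bool" where
  "is_tree V E \<longleftrightarrow> finite V \<and> V \<noteq> {} \<and> is_graph V E \<and> induced_connected V E
     \<and> card E + 1 = card V"

definition is_tree_decomposition ::
  "'a set \<Rightarrow> 'a set set \<Rightarrow> 'b set \<Rightarrow> 'b set set \<Rightarrow> ('b \<Rightarrow> 'a set) \<Rightarrow> bool" where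
  "is_tree_decomposition V E TV TE B \<longleftrightarrow>
     is_tree TV TE \<and> (\<forall>x\<in>TV. B x \<subseteq> V) \<and>
     (\<forall>e\<in>E. \<exists>x\<in>TV. e \<subseteq> B x) \<and>
     (\<forall>v\<in>V. {x\<in>TV. v \<in> B x} \<noteq> {} \<and> induced_connected {x\<in>TV. v \<in> B x} TE)"

definition td_width :: "'b set \<Rightarrow> ('b \<Rightarrow> 'a set) \<Rightarrow> nat" where
  "td_width TV B = Max ((\<lambda>x. card (B x)) ` TV) - 1"

text \<open>Treewidth of a finite graph; tree nodes are indexed by natural numbers
  (no loss of generality, since trees are finite).\<close>
definition treewidth :: "'a set \<Rightarrow> 'a set set \<Rightarrow> nat" where
  "treewidth V E = (LEAST w. \<exists>(TV :: nat set) TE B.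
      is_tree_decomposition V E TV TE B \<and> td_width TV B = w)"

definition kneser_vertices :: "nat \<Rightarrow> nat \<Rightarrow> nat set set" where
  "kneser_vertices n k = {K. K \<subseteq> {1..n} \<and> card K = k}"

definition kneser_edges :: "nat \<Rightarrow> nat \<Rightarrow> nat \<Rightarrow> nat set set set" where
  "kneser_edges n k t = {{K, K'} | K K'. K \<in> kneser_vertices n k \<and> K' \<in> kneser_vertices n k
      \<and> K \<noteq> K' \<and> card (K \<inter> K') < t}"

end

theory Submission
  imports Defs
begin

lemma binom_rel: "Suc j * (m choose Suc j) = (m - j) * (m choose j)"
proof (cases m)
  case 0 then show ?thesis by simp
next
  case (Suc m')
  have "Suc j * (Suc m' choose Suc j) = Suc m' * (m' choose j)" by (rule Suc_times_binomial)
  moreover have "(Suc m' - j) * (Suc m' choose j) = Suc m' * ((Suc m' - 1) choose j)"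
    by (rule binomial_absorb_comp)
  ultimately show ?thesis using Suc by simp
qed

lemma star_conn:
  assumes "c \<in> S" "\<forall>x\<in>S. x \<noteq> c \<longrightarrow> {x, c} \<in> E"
  shows "induced_connected S E"
  unfolding induced_connected_def
proof (intro ballI)
  fix x y assume xy: "x \<in> S" "y \<in> S"
  let ?R = "{(u, v). u \<in> S \<and> v \<in> S \<and> {u, v} \<in> E}"
  have 1: "(z, c) \<in> ?R\<^sup>*" if "z \<in> S" for z
  proof (cases "z = c")
    case False then show ?thesis using assms that by (intro r_into_rtrancl) auto
  qed simp
  have 2: "(c, z) \<in> ?R\<^sup>*" if "z \<in> S" for z
  proof (cases "z = c")
    case False
    then have "{c, z} \<in> E" using assms that by (metis insert_commute)
    then show ?thesis using assms that by (intro r_into_rtrancl) auto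
  qed simp
  show "(x, y) \<in> ?R\<^sup>*" using 1[OF xy(1)] 2[OF xy(2)] by (rule rtrancl_trans)
qed

lemma star_td:
  fixes V :: "'a set" and E :: "'a set set" and I :: "'a set" and P :: "'a \<Rightarrow> 'a set"
  assumes fin: "finite V" and IV: "I \<subseteq> V" and Ine: "I \<noteq> {}"
    and PI: "\<forall>v\<in>I. P v \<subseteq> V - I"
    and cov: "\<forall>e\<in>E. e \<subseteq> V - I \<or> (\<exists>v\<in>I. e \<subseteq> insert v (P v))"
    and b1: "card (V - I) \<le> b" and b2: "\<forall>v\<in>I. card (insert v (P v)) \<le> b"
  shows "treewidth V E \<le> b - 1"
proof -
  have finI: "finite I" using IV fin by (rule finite_subset)
  define c where "c = card I"
  obtain h where h: "bij_betw h {0..<c} I" using ex_bij_betw_nat_finite[OF finI] c_def by blast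
  define TV where "TV = {0..c}"
  define TE where "TE = (\<lambda>i. {i, c}) ` {0..<c}"
  define B where "B = (\<lambda>x. if x < c then insert (h x) (P (h x)) else V - I)"
  have hI: "h x \<in> I" if "x < c" for x using h that by (auto simp: bij_betw_def)
  have cTV: "c \<in> TV" unfolding TV_def by simp
  have edge: "{x, c} \<in> TE" if "x \<in> TV" "x \<noteq> c" for x
    using that unfolding TV_def TE_def by auto
  have tree: "is_tree TV TE"
    unfolding is_tree_def
  proof (intro conjI)
    show "finite TV" "TV \<noteq> {}" unfolding TV_def by auto
    show "is_graph TV TE" unfolding is_graph_def TV_def TE_def
    proof
      fix e assume "e \<in> (\<lambda>i. {i, c}) ` {0..<c}"
      then obtain i where "i < c" "e = {i, c}" by auto
      then show "e \<subseteq> {0..c} \<and> card e = 2" by auto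
    qed
    show "induced_connected TV TE" by (rule star_conn[OF cTV]) (use edge in auto)
    have "inj_on (\<lambda>i. {i, c}) {0..<c}" by (auto simp: inj_on_def doubleton_eq_iff)
    then have "card TE = c" unfolding TE_def by (simp add: card_image)
    then show "card TE + 1 = card TV" unfolding TV_def by simp
  qed
  have vlem: "{x \<in> TV. v \<in> B x} \<noteq> {} \<and> induced_connected {x \<in> TV. v \<in> B x} TE" if vV: "v \<in> V" for v
  proof (cases "v \<in> I")
    case True
    then obtain x0 where x0: "x0 \<in> {0..<c}" "h x0 = v" using h by (auto simp: bij_betw_def)
    have "{x \<in> TV. v \<in> B x} = {x0}"
    proof (intro equalityI subsetI)
      fix x assume "x \<in> {x \<in> TV. v \<in> B x}"
      then have "x \<in> TV" "v \<in> B x" by auto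
      then have "x < c" "v = h x" using True PI hI unfolding B_def by (auto split: if_splits)
      then have "h x = h x0" using x0 by simp
      moreover have "inj_on h {0..<c}" using h by (simp add: bij_betw_def)
      ultimately have "x = x0" using \<open>x < c\<close> x0 by (auto dest: inj_onD)
      then show "x \<in> {x0}" by simp
    qed (use x0 in \<open>auto simp: B_def TV_def\<close>)
    then show ?thesis using star_conn[of x0 "{x0}" TE] by auto
  next
    case False
    have c: "c \<in> {x \<in> TV. v \<in> B x}" using cTV vV False unfolding B_def by auto
    have "induced_connected {x \<in> TV. v \<in> B x} TE"
      by (rule star_conn[OF c]) (use edge in auto)
    then show ?thesis using c by blast
  qed
  have td: "is_tree_decomposition V E TV TE B"
    unfolding is_tree_decomposition_def
  proof (intro conjI ballI)
    show "is_tree TV TE" by (rule tree)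
  next
    fix x assume "x \<in> TV"
    show "B x \<subseteq> V" unfolding B_def using hI PI IV by auto
  next
    fix e assume "e \<in> E"
    then consider "e \<subseteq> V - I" | v where "v \<in> I" "e \<subseteq> insert v (P v)" using cov by blast
    then show "\<exists>x\<in>TV. e \<subseteq> B x"
    proof cases
      case 1 then show ?thesis using cTV unfolding B_def by (intro bexI[of _ c]) auto
    next
      case 2
      then obtain x where "x \<in> {0..<c}" "h x = v" using h by (auto simp: bij_betw_def)
      then show ?thesis using 2 unfolding B_def TV_def by (intro bexI[of _ x]) auto
    qed
  next
    fix v assume "v \<in> V"
    then show "{x \<in> TV. v \<in> B x} \<noteq> {}" using vlem by blast
  next
    fix v assume "v \<in> V"
    then show "induced_connected {x \<in> TV. v \<in> B x} TE" using vlem by blast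
  qed
  have "td_width TV B \<le> b - 1"
  proof -
    have "Max ((\<lambda>x. card (B x)) ` TV) \<le> b"
    proof (subst Max_le_iff)
      show "finite ((\<lambda>x. card (B x)) ` TV)" unfolding TV_def by simp
      show "(\<lambda>x. card (B x)) ` TV \<noteq> {}" unfolding TV_def by simp
      show "\<forall>a\<in>(\<lambda>x. card (B x)) ` TV. a \<le> b"
      proof
        fix a assume "a \<in> (\<lambda>x. card (B x)) ` TV"
        then obtain x where "x \<in> TV" "a = card (B x)" by blast
        then show "a \<le> b" using b1 b2 hI unfolding B_def by (cases "x < c") auto
      qed
    qed
    then show ?thesis unfolding td_width_def by simp
  qed
  moreover have "treewidth V E \<le> td_width TV B"
    unfolding treewidth_def using td by (intro Least_le) blast
  ultimately show ?thesis by simp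
qed


lemma count_fix:
  assumes U: "finite U" and SU: "S \<subseteq> U" and TS: "T \<subseteq> S" and Tk: "card T \<le> k"
  shows "card {K. K \<subseteq> U \<and> card K = k \<and> K \<inter> S = T} = card (U - S) choose (k - card T)"
proof -
  let ?X = "{K. K \<subseteq> U \<and> card K = k \<and> K \<inter> S = T}"
  let ?Y = "{L. L \<subseteq> U - S \<and> card L = k - card T}"
  have finT: "finite T" using TS finite_subset[OF SU U] by (rule finite_subset)
  have "bij_betw (\<lambda>K. K - T) ?X ?Y"
  proof (rule bij_betw_byWitness[where f' = "\<lambda>L. L \<union> T"])
    show "\<forall>a\<in>?X. a - T \<union> T = a" by blast
    show "\<forall>a\<in>?Y. a \<union> T - T = a" using TS by blast
    show "(\<lambda>K. K - T) ` ?X \<subseteq> ?Y"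
    proof
      fix L assume "L \<in> (\<lambda>K. K - T) ` ?X"
      then obtain K where K: "K \<subseteq> U" "card K = k" "K \<inter> S = T" "L = K - T" by blast
      have "finite K" using K(1) U by (rule finite_subset)
      moreover have "T \<subseteq> K" using K by blast
      ultimately have "card L = k - card T" using K finT by (simp add: card_Diff_subset)
      moreover have "L \<subseteq> U - S" using K by blast
      ultimately show "L \<in> ?Y" by blast
    qed
    show "(\<lambda>L. L \<union> T) ` ?Y \<subseteq> ?X"
    proof
      fix K assume "K \<in> (\<lambda>L. L \<union> T) ` ?Y"
      then obtain L where L: "L \<subseteq> U - S" "card L = k - card T" "K = L \<union> T" by blast
      have "finite L" using finite_subset[OF L(1) finite_Diff[OF U]] .
      moreover have "L \<inter> T = {}" using L TS by blast
      ultimately have "card K = card L + card T" using L finT by (simp add: card_Un_disjoint)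
      then have "card K = k" using L Tk by simp
      moreover have "K \<subseteq> U" using L TS SU by blast
      moreover have "K \<inter> S = T" using L TS by blast
      ultimately show "K \<in> ?X" by blast
    qed
  qed
  then have "card ?X = card ?Y" by (rule bij_betw_same_card)
  also have "\<dots> = card (U - S) choose (k - card T)" using U by (simp add: n_subsets)
  finally show ?thesis .
qed

theorem mainTheorem2:
  fixes n k t :: nat
  assumes "0 < t" and "t < k" and "2 * k - t < n" and "n < (t + 1) * (k + 1 - t)"
  shows "int (treewidth (kneser_vertices n k) (kneser_edges n k t))
           < int (n choose k) - int ((n - t) choose (k - t)) - 1"
proof -
  define V where "V = kneser_vertices n k"
  define S where "S = {1..t+2}"
  define F where "F = {K \<in> V. t + 1 \<le> card (K \<inter> S)}"
  define P where "P = (\<lambda>v. {K' \<in> V. card (v \<inter> K') < t})"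
  define M where "M = (n - t) choose (k - t)"
  define N where "N = n choose k"
  define m where "m = n - (t + 2)"
  have nk: "k + 2 \<le> n" using assms(2,3) by linarith
  have SN: "S \<subseteq> {1..n}" unfolding S_def using nk assms by auto
  have cS: "card S = t + 2" unfolding S_def by simp
  have finS: "finite S" unfolding S_def by simp
  have cUS: "card ({1..n} - S) = m" using SN cS unfolding m_def by (simp add: card_Diff_subset finS)
  have Vdef: "V = {K. K \<subseteq> {1..n} \<and> card K = k}" unfolding V_def kneser_vertices_def ..
  have cV: "card V = N" unfolding Vdef N_def using n_subsets[of "{1..n}" k] by simp
  have finV: "finite V" unfolding Vdef by (rule finite_subset[of _ "Pow {1..n}"]) auto
  have FV: "F \<subseteq> V" unfolding F_def by blast
  define A where "A = {K. K \<subseteq> {1..n} \<and> card K = k \<and> K \<inter> {1..t} = {1..t}}"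
  define B0 where "B0 = {K. K \<subseteq> {1..n} \<and> card K = k \<and> K \<inter> S = {1..t}}"
  define G where "G = (\<lambda>a. {K. K \<subseteq> {1..n} \<and> card K = k \<and> K \<inter> S = S - {a}})"
  have tS: "{1..t} \<subseteq> S" unfolding S_def by auto
  have cA: "card A = M" unfolding A_def M_def
    using count_fix[of "{1..n}" "{1..t}" "{1..t}" k] assms nk by (simp add: card_Diff_subset)
  have cB0: "card B0 = m choose (k - t)" unfolding B0_def
    using count_fix[of "{1..n}" S "{1..t}" k] assms SN tS cUS by simp
  have cG: "card (G a) = m choose (k - (t + 1))" if "a \<in> {1..t}" for a
  proof -
    have "a \<in> S" using that tS by blast
    then have "card (S - {a}) = t + 1" using cS finS by simp
    then show ?thesis unfolding G_def
      using count_fix[of "{1..n}" S "S - {a}" k] assms SN cUS by simp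
  qed
  have finA: "finite A" unfolding A_def by (rule finite_subset[of _ "Pow {1..n}"]) auto
  have B0A: "B0 \<subseteq> A" unfolding A_def B0_def using tS by blast
  have AB0F: "A - B0 \<subseteq> F"
  proof
    fix K assume K: "K \<in> A - B0"
    then have KV: "K \<in> V" unfolding A_def Vdef by blast
    have "{1..t} \<subset> K \<inter> S" using K tS unfolding A_def B0_def by blast
    then have "card {1..t} < card (K \<inter> S)" using finS by (intro psubset_card_mono) auto
    then show "K \<in> F" unfolding F_def using KV by simp
  qed
  have GF: "G a \<subseteq> F" if "a \<in> {1..t}" for a
  proof
    fix K assume K: "K \<in> G a"
    have "a \<in> S" using that tS by blast
    then have "card (S - {a}) = t + 1" using cS finS by simp
    then show "K \<in> F" using K unfolding F_def G_def Vdef by auto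
  qed
  have disj1: "(A - B0) \<inter> (\<Union>a\<in>{1..t}. G a) = {}"
  proof -
    have "K \<notin> A" if "K \<in> G a" "a \<in> {1..t}" for K a
    proof -
      have "a \<in> S" using that tS by blast
      then have "a \<notin> K" using that unfolding G_def by blast
      then show ?thesis using that unfolding A_def by blast
    qed
    then show ?thesis by blast
  qed
  have finG: "finite (G a)" for a unfolding G_def by (rule finite_subset[of _ "Pow {1..n}"]) auto
  have cUG: "card (\<Union>a\<in>{1..t}. G a) = t * (m choose (k - (t + 1)))"
  proof -
    have "card (\<Union>a\<in>{1..t}. G a) = (\<Sum>a\<in>{1..t}. card (G a))"
    proof (rule card_UN_disjoint)
      show "finite {1..t}" by simp
      show "\<forall>i\<in>{1..t}. finite (G i)" using finG by blast
      show "\<forall>i\<in>{1..t}. \<forall>j\<in>{1..t}. i \<noteq> j \<longrightarrow> G i \<inter> G j = {}"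
      proof (intro ballI impI)
        fix i j assume ij: "i \<in> {1..t}" "j \<in> {1..t}" "i \<noteq> j"
        then have "i \<in> S" "j \<in> S" using tS by auto
        then have "S - {i} \<noteq> S - {j}" using ij by blast
        then show "G i \<inter> G j = {}" unfolding G_def by blast
      qed
    qed
    also have "\<dots> = (\<Sum>a\<in>{1..t}. m choose (k - (t + 1)))" using cG by (rule sum.cong[OF refl])
    finally show ?thesis by simp
  qed
  have binom: "m choose (k - t) < t * (m choose (k - (t + 1)))"
  proof -
    define j where "j = k - (t + 1)"
    have kt: "k - t = Suc j" unfolding j_def using assms by simp
    have mj: "m - j = n - k - 1" unfolding m_def j_def using assms nk by simp
    have "j \<le> m" unfolding m_def j_def using nk assms by simp
    then have pos: "0 < m choose j" by simp
    have k_eq: "k = t + Suc j" using kt assms by simp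
    define q where "q = t * Suc j"
    have "(t + 1) * (k + 1 - t) = q + k + 1" unfolding q_def using k_eq by (simp add: algebra_simps)
    moreover have "0 < q" unfolding q_def using assms(1) by simp
    ultimately have "n - k - 1 < q" using assms(4) by linarith
    then have lt: "n - k - 1 < t * Suc j" unfolding q_def .
    have "Suc j * (m choose Suc j) = (n - k - 1) * (m choose j)" using binom_rel[of j m] mj by simp
    also have "\<dots> < (t * Suc j) * (m choose j)" using lt pos by simp
    finally have "Suc j * (m choose Suc j) < Suc j * (t * (m choose j))" by (simp add: algebra_simps)
    then have "m choose Suc j < t * (m choose j)" using mult_less_cancel1 by blast
    then show ?thesis unfolding kt j_def[symmetric] .
  qed
  have cF: "M + 1 \<le> card F"
  proof -
    have finF: "finite F" using FV finV by (rule finite_subset)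
    have "card ((A - B0) \<union> (\<Union>a\<in>{1..t}. G a)) \<le> card F"
    proof (rule card_mono[OF finF])
      show "(A - B0) \<union> (\<Union>a\<in>{1..t}. G a) \<subseteq> F" using AB0F GF by blast
    qed
    moreover have "card ((A - B0) \<union> (\<Union>a\<in>{1..t}. G a)) = card (A - B0) + card (\<Union>a\<in>{1..t}. G a)"
      using disj1 finA finG by (intro card_Un_disjoint) auto
    moreover have "card (A - B0) = M - (m choose (k - t))"
      using B0A finite_subset[OF B0A finA] cA cB0 by (simp add: card_Diff_subset)
    moreover have "m choose (k - t) \<le> M" using B0A finA cA cB0 card_mono by metis
    ultimately show ?thesis using cUG binom by linarith
  qed
  have inter: "t \<le> card (v \<inter> w)" if "v \<in> F" "w \<in> F" for v w
  proof -
    have fv: "finite v" using that(1) F_def Vdef finite_subset[of v "{1..n}"] by auto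
    have h1: "card (v \<inter> S) + card (w \<inter> S) = card ((v \<inter> S) \<union> (w \<inter> S)) + card ((v \<inter> S) \<inter> (w \<inter> S))"
      using finS by (intro card_Un_Int) auto
    have h2: "card ((v \<inter> S) \<union> (w \<inter> S)) \<le> t + 2" using cS finS card_mono[of S] by auto
    have h3: "card ((v \<inter> S) \<inter> (w \<inter> S)) \<le> card (v \<inter> w)" using fv by (intro card_mono) auto
    show ?thesis using h1 h2 h3 that unfolding F_def by simp
  qed
  have PI: "\<forall>v\<in>F. P v \<subseteq> V - F"
    using inter unfolding P_def by (auto simp: not_less[symmetric])
  have cov: "\<forall>e\<in>kneser_edges n k t. e \<subseteq> V - F \<or> (\<exists>v\<in>F. e \<subseteq> insert v (P v))"
  proof
    fix e assume "e \<in> kneser_edges n k t"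
    then obtain K K' where e: "e = {K, K'}" "K \<in> V" "K' \<in> V" "card (K \<inter> K') < t"
      unfolding kneser_edges_def V_def by blast
    show "e \<subseteq> V - F \<or> (\<exists>v\<in>F. e \<subseteq> insert v (P v))"
    proof (cases "K \<in> F")
      case True
      then show ?thesis using e unfolding P_def by blast
    next
      case False
      show ?thesis
      proof (cases "K' \<in> F")
        case True
        have "card (K' \<inter> K) < t" using e by (simp add: Int_commute)
        then show ?thesis using e True unfolding P_def by blast
      qed (use e False in blast)
    qed
  qed
  have nonnb: "\<exists>u\<in>V - F. u \<notin> P v" if vF: "v \<in> F" for v
  proof -
    have vV: "v \<subseteq> {1..n}" "card v = k" using vF FV unfolding Vdef by auto
    have fv: "finite v" using vV(1) by (rule finite_subset) simp
    define D0 where "D0 = v \<inter> S"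
    define d where "d = card D0"
    have d1: "t + 1 \<le> d" using vF unfolding F_def d_def D0_def by simp
    have d2: "d \<le> k" unfolding d_def D0_def using fv vV card_mono by (metis inf_le1)
    have fD0: "finite D0" unfolding D0_def using finS by simp
    obtain D where D: "D \<subseteq> D0" "card D = d - t" "finite D"
      using obtain_subset_with_card_n[of "d - t" D0] d_def by auto
    define R where "R = {1..n} - (v \<union> S)"
    have cvS: "card (v \<union> S) + d = k + (t + 2)"
      using card_Un_Int[OF fv finS] vV cS unfolding d_def D0_def by simp
    have cR: "card R = n - card (v \<union> S)" unfolding R_def
      using card_Diff_subset[of "v \<union> S" "{1..n}"] vV SN fv finS by simp
    have "d - t \<le> card R" using cR cvS nk d1 by linarith
    then obtain E where E: "E \<subseteq> R" "card E = d - t" "finite E"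
      using obtain_subset_with_card_n[of "d - t" R] by auto
    define u where "u = (v - D) \<union> E"
    have Dv: "D \<subseteq> v" using D unfolding D0_def by blast
    have cvD: "card (v - D) = k - (d - t)" using Dv fv vV D by (simp add: card_Diff_subset)
    have dis: "(v - D) \<inter> E = {}" using E unfolding R_def by blast
    have cu: "card u = k" unfolding u_def using card_Un_disjoint[of "v - D" E] dis fv E cvD d1 d2 by simp
    have un: "u \<subseteq> {1..n}" unfolding u_def using vV E unfolding R_def by blast
    have uS: "u \<inter> S = D0 - D" unfolding u_def D0_def using E unfolding R_def by blast
    have "card (u \<inter> S) = t" using uS D fD0 d1 unfolding d_def by (simp add: card_Diff_subset)
    then have uF: "u \<notin> F" unfolding F_def by simp
    have uV: "u \<in> V" unfolding Vdef using un cu by blast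
    have "v - D \<subseteq> v \<inter> u" unfolding u_def by blast
    then have "card (v - D) \<le> card (v \<inter> u)" using fv by (intro card_mono) auto
    then have "t \<le> card (v \<inter> u)" using cvD d1 d2 by linarith
    then have "u \<notin> P v" unfolding P_def by simp
    then show ?thesis using uF uV by blast
  qed
  have finF: "finite F" using FV finV by (rule finite_subset)
  have cVF: "card (V - F) = N - card F" using cV FV finF by (simp add: card_Diff_subset)
  have Fne: "F \<noteq> {}" using cF by auto
  then obtain v0 where "v0 \<in> F" by blast
  then obtain u0 where "u0 \<in> V - F" using nonnb by blast
  then have cVF1: "1 \<le> card (V - F)" using finV by (metis One_nat_def Suc_leI card_gt_0_iff empty_iff finite_Diff)
  have NF: "card F + 1 \<le> N" using cVF cVF1 cF by linarith
  have b1: "card (V - F) \<le> N - M - 1" using cVF cF by linarith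
  have b2: "\<forall>v\<in>F. card (insert v (P v)) \<le> N - M - 1"
  proof
    fix v assume vF: "v \<in> F"
    obtain u where u: "u \<in> V - F" "u \<notin> P v" using nonnb[OF vF] by blast
    have "P v \<subseteq> (V - F) - {u}" using PI vF u by blast
    then have "card (P v) \<le> card ((V - F) - {u})" using finV by (intro card_mono) auto
    also have "\<dots> = card (V - F) - 1" using u finV by simp
    finally have "card (P v) + 1 \<le> card (V - F)" using cVF1 by linarith
    moreover have "card (insert v (P v)) \<le> card (P v) + 1" by (simp add: card_insert_le_m1)
    ultimately show "card (insert v (P v)) \<le> N - M - 1" using b1 by linarith
  qed
  have tw: "treewidth V (kneser_edges n k t) \<le> N - M - 1 - 1"
    by (rule star_td[OF finV FV Fne PI cov b1 b2])
  have "int (treewidth V (kneser_edges n k t)) < int N - int M - 1"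
    using tw NF cF by linarith
  then show ?thesis unfolding V_def N_def M_def .
qed

end
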